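(* For every real $\eta > -1$, $$ \frac{15\pi}{32} = \frac{ {}_{3}F_{2}\!\!\left[ \begin{matrix} -\tfrac{3}{2},1,-\eta \\ \tfrac{7}{2},2+\eta \end{matrix} \ \Bigg| \ -1 \right] }{ {}_{3}F_{2}\!\!\left[ \begin{matrix} -\tfrac{3}{2},\tfrac{1}{2},1+\eta \\ 1,2+\eta \end{matrix} \ \Bigg| \ 1 \right]}.$$
   Context: ${}_pF_q\left[\begin{matrix} a_1,\dots,a_p\\ b_1,\dots,b_q\end{matrix}\,\Big|\, z\right] = \sum_{n\ge 0} \frac{(a_1)_n\cdots(a_p)_n}{(b_1)_n\cdots(b_q)_n}\frac{z^n}{n!}$ with $(x)_n = \Gamma(x+n)/\Gamma(x)$. *)

theory Defs
  imports Complex_Main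
begin

definition hypergeom :: "real list \<Rightarrow> real list \<Rightarrow> real \<Rightarrow> real" where
  "hypergeom as bs z =
     (\<Sum>n. (prod_list (map (\<lambda>a. pochhammer a n) as) /
            prod_list (map (\<lambda>b. pochhammer b n) bs)) * z ^ n / fact n)"

end

theory Submission
  imports Defs "HOL-Analysis.Analysis"
begin

no_notation Infinite_Set_Sum.abs_summable_on (infix \<open>abs'_summable'_on\<close> 50)

definition nu :: "nat \<Rightarrow> real" where
  "nu n = pochhammer (-3/2) n / pochhammer (7/2) n * (-1)^n"
definition Bf :: "nat \<Rightarrow> real \<Rightarrow> real" where
  "Bf n x = pochhammer (-x) n / pochhammer (2+x) n"
definition cc :: "nat \<Rightarrow> real" where
  "cc k = pochhammer (-3/2) k * pochhammer (1/2) k / (fact k)^2"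

lemma poch_pos2: "x > -1 \<Longrightarrow> pochhammer (2+x) n > (0::real)"
  by (rule pochhammer_pos) simp

lemma Bf_Suc: "x > -1 \<Longrightarrow> Bf (Suc n) x = Bf n x * (real n - x) / (real n + 2 + x)"
  using poch_pos2[of x n]
  by (simp add: Bf_def pochhammer_Suc field_simps)

lemma Bf_0 [simp]: "Bf 0 x = 1" by (simp add: Bf_def)

lemma Bf_bound: "x > -1 \<Longrightarrow> \<bar>Bf n x\<bar> \<le> 1"
proof (induction n)
  case 0 then show ?case by simp
next
  case (Suc n)
  have pos: "real n + 2 + x > 0" using Suc.prems by linarith
  have a: "\<bar>real n - x\<bar> \<le> real n + 2 + x"
    unfolding abs_le_iff using Suc.prems by linarith
  have "\<bar>(real n - x) / (real n + 2 + x)\<bar> = \<bar>real n - x\<bar> / (real n + 2 + x)"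
    using pos by (simp add: abs_divide)
  also have "\<dots> \<le> 1" using a pos by (simp add: divide_le_eq_1)
  finally have b: "\<bar>(real n - x) / (real n + 2 + x)\<bar> \<le> 1" .
  have "\<bar>Bf n x\<bar> * \<bar>(real n - x) / (real n + 2 + x)\<bar> \<le> 1 * 1"
    by (rule mult_mono[OF Suc.IH[OF Suc.prems] b]) simp_all
  moreover have "Bf (Suc n) x = Bf n x * ((real n - x) / (real n + 2 + x))"
    using Bf_Suc[OF Suc.prems, of n] by simp
  ultimately show ?case by (simp add: abs_mult)
qed

lemma Bf_zero: "m < n \<Longrightarrow> Bf n (real m) = 0"
  by (simp add: Bf_def pochhammer_of_nat_eq_0_lemma)

lemma Bf_nz: "Bf n (real n) \<noteq> 0"
  using poch_pos2[of "real n" n] by (auto simp: Bf_def pochhammer_eq_0_iff)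

definition q5 :: "nat \<Rightarrow> real" where
  "q5 n = (real n - 3/2) * (real n - 1/2) * (real n + 1/2) * (real n + 3/2) * (real n + 5/2)"

lemma test_e1: "q5 (Suc n) * (real n - 3/2) = q5 n * (real n + 7/2)"
  unfolding q5_def of_nat_Suc by algebra

lemma half_nz: "real n - 3/2 \<noteq> 0" "real n - 1/2 \<noteq> 0" "real n + 1/2 \<noteq> 0"
  "real n + 3/2 \<noteq> 0" "real n + 5/2 \<noteq> 0" "real n + 7/2 \<noteq> 0"
proof -
  show "real n - 3/2 \<noteq> 0"
  proof
    assume "real n - 3/2 = 0" then have "real (2*n) = real 3" by simp
    then have "2*n = 3" by (simp only: of_nat_eq_iff)
    then show False by presburger
  qed
  show "real n - 1/2 \<noteq> 0"
  proof
    assume "real n - 1/2 = 0" then have "real (2*n) = real 1" by simp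
    then have "2*n = 1" by (simp only: of_nat_eq_iff)
    then show False by presburger
  qed
qed (simp_all add: add_pos_nonneg)

lemma nu_Suc: "nu (Suc n) = nu n * (-(real n - 3/2) / (real n + 7/2))"
proof -
  have a: "pochhammer (-3/2) (Suc n) = pochhammer (-3/2) n * (real n - 3/2)"
    by (simp add: pochhammer_Suc)
  have b: "pochhammer (7/2) (Suc n) = pochhammer (7/2) n * (real n + 7/2)"
    by (simp add: pochhammer_Suc add.commute)
  define P where "P = pochhammer (-3/2::real) n"
  define Q where "Q = pochhammer (7/2::real) n"
  define A where "A = real n - 3/2"
  define B where "B = real n + 7/2"
  have "nu (Suc n) = (P * A) / (Q * B) * ((-1)^n * (-1))"
    unfolding nu_def a b P_def Q_def A_def B_def by simp
  also have "(P * A) / (Q * B) = (P / Q) * (A / B)" by simp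
  also have "(P / Q) * (A / B) * ((-1)^n * (-1)) = (P / Q * (-1)^n) * (- (A / B))" by simp
  also have "- (A / B) = -A / B" by simp
  finally show ?thesis unfolding nu_def P_def Q_def A_def B_def .
qed

lemma q5_nz: "q5 n \<noteq> 0"
  using half_nz[of n] by (simp add: q5_def)

lemma nu_closed: "nu n = 45/32 * (-1)^n / q5 n"
proof (induction n)
  case 0 then show ?case by (simp add: nu_def q5_def)
next
  case (Suc n)
  have e: "q5 (Suc n) * (real n - 3/2) = q5 n * (real n + 7/2)"
    unfolding q5_def of_nat_Suc by algebra
  have h1: "real n - 3/2 \<noteq> 0" "real n + 7/2 \<noteq> 0" using half_nz[of n] by auto
  have h2: "q5 n \<noteq> 0" by (rule q5_nz)
  have "nu (Suc n) = 45/32 * (-1)^n / q5 n * (-(real n - 3/2) / (real n + 7/2))"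
    using Suc.IH nu_Suc by simp
  also have "\<dots> = 45/32 * (-1)^(Suc n) / (q5 n * (real n + 7/2) / (real n - 3/2))"
    using h1 h2 by (simp add: field_simps)
  also have "q5 n * (real n + 7/2) / (real n - 3/2) = q5 (Suc n)"
    using e h1 by (simp add: field_simps)
  finally show ?case .
qed

lemma q5_ge: "n \<ge> 2 \<Longrightarrow> q5 n \<ge> real n ^ 2"
proof -
  assume n: "n \<ge> 2"
  then have rn: "real n \<ge> 2" by simp
  have "(real n + 1/2) * (real n + 3/2) \<ge> real n ^ 2"
    using rn by (simp add: power2_eq_square algebra_simps)
  moreover have "(real n - 3/2) * (real n - 1/2) * (real n + 5/2) \<ge> 1"
  proof -
    have "(real n - 3/2) * (real n - 1/2) \<ge> 1/2 * 1"
      using rn by (intro mult_mono) auto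
    then have "(real n - 3/2) * (real n - 1/2) * (real n + 5/2) \<ge> 1/2 * 2"
      using rn by (intro mult_mono) auto
    then show ?thesis by simp
  qed
  ultimately have "((real n - 3/2) * (real n - 1/2) * (real n + 5/2)) * ((real n + 1/2) * (real n + 3/2)) \<ge> 1 * real n ^ 2"
    by (intro mult_mono) auto
  moreover have "q5 n = ((real n - 3/2) * (real n - 1/2) * (real n + 5/2)) * ((real n + 1/2) * (real n + 3/2))"
    by (simp add: q5_def mult_ac)
  ultimately show ?thesis by simp
qed

lemma nu_bound: "n \<ge> 2 \<Longrightarrow> \<bar>nu n\<bar> \<le> 2 / real n ^ 2"
proof -
  assume n: "n \<ge> 2"
  have q: "q5 n \<ge> real n ^ 2" by (rule q5_ge[OF n])
  have p: "real n ^ 2 > 0" using n by simp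
  have qp: "q5 n > 0" using q p by linarith
  have "\<bar>nu n\<bar> = 45/32 / q5 n" using abs_of_pos[OF qp] by (simp add: nu_closed abs_divide abs_mult)
  also have "\<dots> \<le> 45/32 / real n ^ 2" using q p qp by (intro divide_left_mono) auto
  also have "\<dots> \<le> 2 / real n ^ 2" using p by (intro divide_right_mono) auto
  finally show ?thesis .
qed

lemma summable_inv_sq: "summable (\<lambda>n. 2 / real n ^ 2)"
proof -
  have "summable (\<lambda>n. inverse (real n ^ 2))" by (rule inverse_power_summable) simp
  then have "summable (\<lambda>n. 2 * inverse (real n ^ 2))" by (rule summable_mult)
  then show ?thesis by (simp add: field_simps)
qed

lemma nu_abs_summable: "summable (\<lambda>n. \<bar>nu n\<bar>)"
  by (rule summable_comparison_test'[OF summable_inv_sq, of 2]) (simp add: nu_bound)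

lemma N_abs_summable: "x > -1 \<Longrightarrow> summable (\<lambda>n. \<bar>nu n * Bf n x\<bar>)"
proof (rule summable_comparison_test'[OF nu_abs_summable, of 0])
  fix n assume "x > -1"
  then have "\<bar>Bf n x\<bar> \<le> 1" by (rule Bf_bound)
  then show "norm \<bar>nu n * Bf n x\<bar> \<le> \<bar>nu n\<bar>"
    by (simp add: abs_mult mult_left_le)
qed

lemma Bf_shift:
  assumes x: "x > -1"
  shows "Bf (Suc m) (x+1) = -(x+1)*(x+2) * Bf m x / ((real m + 2 + x) * (real m + 3 + x))"
proof -
  have Q: "pochhammer (2+x) m > 0" using poch_pos2[OF x] by simp
  have n1: "pochhammer (-(x+1)) (Suc m) = -(x+1) * pochhammer (-x) m"
    by (simp add: pochhammer_rec)
  have d1: "pochhammer (2+x) (Suc m) = (2+x) * pochhammer (3+x) m"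
    by (simp add: pochhammer_rec add_ac)
  have d2: "pochhammer (2+x) (Suc m) = pochhammer (2+x) m * (real m + 2 + x)"
    by (simp add: pochhammer_Suc add_ac)
  have d3: "pochhammer (3+x) m = pochhammer (2+x) m * (real m + 2 + x) / (2+x)"
    using d1 d2 x by (simp add: field_simps)
  have d4: "pochhammer (2+(x+1)) (Suc m) = pochhammer (3+x) m * (real m + 3 + x)"
    by (simp add: pochhammer_Suc add_ac)
  have "Bf (Suc m) (x+1) = -(x+1) * pochhammer (-x) m / (pochhammer (2+x) m * (real m + 2 + x) / (2+x) * (real m + 3 + x))"
    unfolding Bf_def n1 d4 d3 by (rule refl)
  also have "\<dots> = -(x+1)*(x+2) * Bf m x / ((real m + 2 + x) * (real m + 3 + x))"
    unfolding Bf_def using Q x by (simp add: field_simps)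
  finally show ?thesis .
qed

definition Nser :: "real \<Rightarrow> real" where
  "Nser x = (\<Sum>n. nu n * Bf n x)"

definition zN :: "real \<Rightarrow> nat \<Rightarrow> real" where
  "zN x n = (if n = 0 then -5/4 else (real n + 5/2)*(x+1)*nu n*Bf (n-1) x/(2*(x+real n+1)))"

lemma nu_1: "nu (Suc 0) = 3/7" by (simp add: nu_def)
lemma nu_0: "nu 0 = 1" by (simp add: nu_def)

lemma zN_step:
  assumes x: "x > -1"
  shows "zN x (Suc n) - zN x n = (x+7/2)*(x+3/2)/(x+2) * (nu n * Bf n (x+1)) - (x+1) * (nu n * Bf n x)"
proof (cases n)
  case 0
  have "x + 2 > 0" using x by simp
  then show ?thesis using 0 by (simp add: zN_def nu_1 nu_0 Bf_def field_simps)
next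
  case (Suc m)
  define b where "b = Bf m x"
  define v where "v = nu n"
  have p1: "real m + 2 + x > 0" "real m + 3 + x > 0" "x + 2 > 0" "x + 1 > 0" using x by auto
  have h7: "real n + 7/2 > 0" by simp
  have e1: "zN x (Suc n) = (real n + 7/2)*(x+1)*(v * (-(real n - 3/2) / (real n + 7/2)))*(b * (real m - x) / (real m + 2 + x))/(2*(real m + 3 + x))"
    using Suc x unfolding zN_def v_def b_def by (simp add: nu_Suc Bf_Suc add_ac)
  have e2: "zN x n = (real n + 5/2)*(x+1) * v * b/(2*(real m + 2 + x))"
    using Suc unfolding zN_def v_def b_def by (simp add: add_ac)
  have e3: "Bf n (x+1) = -(x+1)*(x+2) * b / ((real m + 2 + x) * (real m + 3 + x))"
    using Bf_shift[OF x, of m] Suc b_def by simp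
  have e4: "Bf n x = b * (real m - x) / (real m + 2 + x)"
    using Bf_Suc[OF x, of m] Suc b_def by simp
  have rn: "real n = real m + 1" using Suc by simp
  obtain A C E G where AC: "A = real m + 2 + x" "C = real m + 3 + x" "E = x + 2" "G = real m + 1 + 7/2"
    by blast
  have pos: "A > 0" "C > 0" "E > 0" "G > 0" using p1 AC by auto
  have "(G*(x+1)*(v * (-(real m + 1 - 3/2)/G))*(b*(real m - x)/A)/(2*C) - (real m + 1 + 5/2)*(x+1) * v * b/(2*A))
     = (x+7/2)*(x+3/2)/E*(v * (-(x+1)*E*b/(A*C))) - (x+1)*(v * (b*(real m - x)/A))"
    using pos by (simp add: field_simps; (simp only: AC; algebra)?)
  then show ?thesis
    unfolding e1 e2 e3 e4 v_def[symmetric] rn AC by simp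
qed

lemma nu_tendsto0: "nu \<longlonglongrightarrow> 0"
  using summable_LIMSEQ_zero[OF nu_abs_summable] by (simp add: tendsto_rabs_zero_iff)

lemma zN_tendsto0:
  assumes x: "x > -1"
  shows "zN x \<longlonglongrightarrow> 0"
proof (rule Lim_null_comparison)
  show "eventually (\<lambda>M. norm (zN x M) \<le> 2 * (x+1) * \<bar>nu M\<bar>) sequentially"
    using eventually_ge_at_top[of "1::nat"]
  proof eventually_elim
    case (elim M)
    then have M0: "M \<noteq> 0" by simp
    have d: "x + real M + 1 > 0" using x by simp
    have r: "(real M + 5/2) / (2*(x + real M + 1)) \<le> 2"
      using d elim x by (simp add: divide_le_eq)
    have r0: "(real M + 5/2) / (2*(x + real M + 1)) \<ge> 0" using d by simp
    have bb: "\<bar>Bf (M-1) x\<bar> \<le> 1" by (rule Bf_bound[OF x])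
    have z: "zN x M = (x+1) * nu M * Bf (M-1) x * ((real M + 5/2) / (2*(x + real M + 1)))"
      using M0 by (simp add: zN_def)
    have "norm (zN x M) = \<bar>x+1\<bar> * \<bar>nu M\<bar> * \<bar>Bf (M-1) x\<bar> * \<bar>(real M + 5/2) / (2*(x + real M + 1))\<bar>"
      unfolding z real_norm_def abs_mult ..
    also have "\<dots> = (x+1) * \<bar>nu M\<bar> * \<bar>Bf (M-1) x\<bar> * ((real M + 5/2) / (2*(x + real M + 1)))"
      using x r0 by simp
    also have "\<dots> \<le> (x+1) * \<bar>nu M\<bar> * 1 * 2"
      using bb r r0 x by (intro mult_mono mult_left_mono) auto
    finally show ?case by (simp add: algebra_simps)
  qed
  show "(\<lambda>M. 2 * (x+1) * \<bar>nu M\<bar>) \<longlonglongrightarrow> 0"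
    using tendsto_mult_right_zero[OF iffD2[OF tendsto_rabs_zero_iff nu_tendsto0], of "2*(x+1)"] by simp
qed

lemma N_summable: "x > -1 \<Longrightarrow> summable (\<lambda>n. nu n * Bf n x)"
  by (rule summable_rabs_cancel, rule N_abs_summable)

lemma N_rec:
  assumes x: "x > -1"
  shows "(x+7/2)*(x+3/2)/(x+2) * Nser (x+1) - (x+1) * Nser x = 5/4"
proof -
  define s where "s n = (x+7/2)*(x+3/2)/(x+2) * (nu n * Bf n (x+1)) - (x+1) * (nu n * Bf n x)" for n
  have x1: "x + 1 > -1" using x by simp
  have "s sums ((x+7/2)*(x+3/2)/(x+2) * Nser (x+1) - (x+1) * Nser x)"
    unfolding s_def Nser_def
    by (rule sums_diff; rule sums_mult; rule summable_sums; rule N_summable; fact)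
  moreover have "s sums (5/4)"
  proof -
    have "(\<Sum>n<M. s n) = zN x M - zN x 0" for M
    proof -
      have "(\<Sum>n<M. s n) = (\<Sum>n<M. zN x (Suc n) - zN x n)"
        using zN_step[OF x] by (simp add: s_def)
      also have "\<dots> = zN x M - zN x 0" by (rule sum_lessThan_telescope)
      finally show ?thesis .
    qed
    then have "(\<lambda>M. \<Sum>n<M. s n) = (\<lambda>M. zN x M - zN x 0)" by simp
    moreover have "(\<lambda>M. zN x M - zN x 0) \<longlonglongrightarrow> 0 - zN x 0"
      by (intro tendsto_diff zN_tendsto0 x tendsto_const)
    ultimately show ?thesis unfolding sums_def by (simp add: zN_def)
  qed
  ultimately show ?thesis using sums_unique2 by blast
qed

lemma cc_Suc: "cc (Suc k) = cc k * ((real k - 3/2) * (real k + 1/2) / (real k + 1)^2)"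
proof -
  have f: "fact (Suc k) = (real k + 1) * fact k" by (simp add: algebra_simps)
  have fp: "fact k > (0::real)" by simp
  have a: "pochhammer (-3/2) (Suc k) = pochhammer (-3/2) k * (real k - 3/2)"
    by (simp add: pochhammer_Suc)
  have b: "pochhammer (1/2) (Suc k) = pochhammer (1/2) k * (real k + 1/2)"
    by (simp add: pochhammer_Suc add.commute)
  show ?thesis unfolding cc_def a b f using fp by (simp add: field_simps power2_eq_square)
qed

lemma cc_0: "cc 0 = 1" by (simp add: cc_def)

lemma cc_partial: "(\<Sum>k<N. cc k) = 4/9 * (real N)^2 * (4 * real N - 7) * cc N"
proof (induction N)
  case 0 then show ?case by simp
next
  case (Suc N)
  obtain r where r: "r = real N + 1" by blast
  have p: "r > 0" using r by simp
  have "(\<Sum>k<Suc N. cc k) = 4/9 * (real N)^2 * (4 * real N - 7) * cc N + cc N"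
    using Suc by simp
  also have "\<dots> = 4/9 * (4 * (real N + 1) - 7) * (cc N * ((real N - 3/2) * (real N + 1/2)))"
    by algebra
  also have "\<dots> = 4/9 * (4 * r - 7) * (cc N * ((real N - 3/2) * (real N + 1/2)))"
    unfolding r ..
  also have "\<dots> = 4/9 * r^2 * (4 * r - 7) * (cc N * ((real N - 3/2) * (real N + 1/2) / r^2))"
    using p by (simp add: field_simps)
  also have "\<dots> = 4/9 * (real (Suc N))^2 * (4 * real (Suc N) - 7) * cc (Suc N)"
  proof -
    have rs: "real (Suc N) = r" using r by simp
    have "cc (Suc N) = cc N * ((real N - 3/2) * (real N + 1/2) / r^2)" using cc_Suc r by simp
    then show ?thesis unfolding rs by simp
  qed
  finally show ?case .
qed

lemma not_npi1: "(-3/2::real) \<notin> \<int>\<^sub>\<le>\<^sub>0"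
proof -
  have "(-3/2::real) \<notin> \<int>"
  proof
    assume "(-3/2::real) \<in> \<int>"
    then have "-(-3/2::real) \<in> \<int>" by (rule Ints_minus)
    then show False by simp
  qed
  then show ?thesis by (rule not_in_Ints_imp_not_in_nonpos_Ints)
qed

lemma not_npi2: "(1/2::real) \<notin> \<int>\<^sub>\<le>\<^sub>0"
  by (rule not_in_Ints_imp_not_in_nonpos_Ints) simp

lemma poch_fact_GS:
  fixes z :: real
  assumes z: "z \<notin> \<int>\<^sub>\<le>\<^sub>0" and n: "n > 0" and zn: "z + real n \<noteq> 0"
  shows "pochhammer z n / fact n = exp (z * ln (real n)) / (Gamma_series z n * (z + real n))"
proof -
  have pz: "pochhammer z (Suc n) \<noteq> 0"
  proof
    assume "pochhammer z (Suc n) = 0"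
    then obtain k where "z = - of_nat k" by (auto simp: pochhammer_eq_0_iff)
    then show False using z by simp
  qed
  have ps: "pochhammer z (Suc n) = pochhammer z n * (z + real n)" by (simp add: pochhammer_Suc)
  obtain w where w: "w = z + real n" by blast
  obtain E where E: "E = exp (z * ln (real n))" by blast
  obtain P where P: "P = pochhammer z n" by blast
  obtain F where F: "F = (fact n :: real)" by blast
  have gs: "Gamma_series z n = F * E / (P * w)"
    unfolding Gamma_series_def using ps w E P F by simp
  have pn: "P \<noteq> 0" using pz ps P by simp
  have ex: "E \<noteq> 0" using E by simp
  have fn: "F \<noteq> 0" using F by simp
  have wn: "w \<noteq> 0" using zn w by simp
  have "P / F = E / (F * E / (P * w) * w)" using pn ex fn wn by (simp add: field_simps)
  then show ?thesis unfolding gs using w E P F by simp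
qed

lemma Gamma_m32: "Gamma (-3/2::real) = 4/3 * sqrt pi"
proof -
  have a: "Gamma (-1/2 :: real) = (-3/2) * Gamma (-3/2)"
    using Gamma_plus1[OF not_npi1] by simp
  have n2: "(-1/2::real) \<notin> \<int>\<^sub>\<le>\<^sub>0"
  proof -
    have "(-1/2::real) \<notin> \<int>"
    proof
      assume "(-1/2::real) \<in> \<int>"
      then have "-(-1/2::real) \<in> \<int>" by (rule Ints_minus)
      then show False by simp
    qed
    then show ?thesis by (rule not_in_Ints_imp_not_in_nonpos_Ints)
  qed
  have b: "Gamma (1/2 :: real) = (-1/2) * Gamma (-1/2)"
    using Gamma_plus1[OF n2] by simp
  show ?thesis using a b Gamma_one_half_real by simp
qed

lemma Gamma_m32': "Gamma (-(3/2)::real) = 4/3 * sqrt pi"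
  using Gamma_m32 by simp

lemma cc_lim: "(\<lambda>n. real n ^ 3 * cc n) \<longlonglongrightarrow> 3 / (4 * pi)"
proof -
  define G1 where "G1 = Gamma_series (-3/2::real)"
  define G2 where "G2 = Gamma_series (1/2::real)"
  have ev: "eventually (\<lambda>n. real n ^ 3 * cc n =
      1 / ((1 - 3/2 * inverse (real n)) * (1 + 1/2 * inverse (real n))) / (G1 n * G2 n)) sequentially"
    using eventually_ge_at_top[of "1::nat"]
  proof eventually_elim
    case (elim n)
    then have n: "n > 0" and rn: "real n > 0" by auto
    have h1: "-3/2 + real n \<noteq> 0" "1/2 + real n \<noteq> 0" using half_nz[of n] by (auto simp: algebra_simps)
    have e1: "pochhammer (-3/2) n / fact n = exp (-3/2 * ln (real n)) / (G1 n * (-3/2 + real n))"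
      unfolding G1_def by (rule poch_fact_GS[OF not_npi1 n h1(1)])
    have e2: "pochhammer (1/2) n / fact n = exp (1/2 * ln (real n)) / (G2 n * (1/2 + real n))"
      unfolding G2_def by (rule poch_fact_GS[OF not_npi2 n h1(2)])
    have g1: "G1 n \<noteq> 0"
    proof
      assume "G1 n = 0"
      then have "pochhammer (-3/2) n / fact n = (0::real)" using e1 by simp
      moreover have "pochhammer (-3/2::real) n \<noteq> 0"
      proof -
        have "(-3/2::real) \<noteq> - of_nat k" for k
        proof
          assume e: "(-3/2::real) = - of_nat k"
          have "(-3/2::real) \<in> \<int>\<^sub>\<le>\<^sub>0" by (subst e) (rule minus_of_nat_in_nonpos_Ints)
          then show False using not_npi1 by simp
        qed
        then show ?thesis unfolding pochhammer_eq_0_iff by blast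
      qed
      ultimately show False by simp
    qed
    have g2: "G2 n \<noteq> 0"
    proof
      assume "G2 n = 0"
      then have "pochhammer (1/2) n / fact n = (0::real)" using e2 by simp
      moreover have "pochhammer (1/2::real) n \<noteq> 0"
      proof -
        have "(1/2::real) \<noteq> - of_nat k" for k
        proof
          assume e: "(1/2::real) = - of_nat k"
          have "(1/2::real) \<in> \<int>\<^sub>\<le>\<^sub>0" by (subst e) (rule minus_of_nat_in_nonpos_Ints)
          then show False using not_npi2 by simp
        qed
        then show ?thesis unfolding pochhammer_eq_0_iff by blast
      qed
      ultimately show False by simp
    qed
    have "exp (-3/2 * ln (real n)) * exp (1/2 * ln (real n)) = exp (-3/2 * ln (real n) + 1/2 * ln (real n))"
      by (rule exp_add[symmetric])
    also have "-3/2 * ln (real n) + 1/2 * ln (real n) = - ln (real n)" by simp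
    also have "exp (- ln (real n)) = inverse (real n)" using rn by (simp add: exp_minus)
    finally have ee: "exp (-3/2 * ln (real n)) * exp (1/2 * ln (real n)) = inverse (real n)" .
    have "cc n = (pochhammer (-3/2) n / fact n) * (pochhammer (1/2) n / fact n)"
      by (simp add: cc_def power2_eq_square)
    also have "\<dots> = (exp (-3/2 * ln (real n)) * exp (1/2 * ln (real n))) / (G1 n * G2 n * ((-3/2 + real n) * (1/2 + real n)))"
      unfolding e1 e2 by simp
    also have "\<dots> = inverse (real n) / (G1 n * G2 n * ((-3/2 + real n) * (1/2 + real n)))"
      unfolding ee ..
    finally have c: "cc n = inverse (real n) / (G1 n * G2 n * ((-3/2 + real n) * (1/2 + real n)))" .
    obtain a b m where ab: "a = -3/2 + real n" "b = 1/2 + real n" "m = real n" by blast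
    have k1': "(1 - 3/2 * inverse (real n)) = (-3/2 + real n) / real n" using rn by (simp add: field_simps)
    have k2': "(1 + 1/2 * inverse (real n)) = (1/2 + real n) / real n" using rn by (simp add: field_simps)
    have k1: "(1 - 3/2 * inverse (real n)) = a / m" using k1' ab by simp
    have k2: "(1 + 1/2 * inverse (real n)) = b / m" using k2' ab by simp
    have nz: "a \<noteq> 0" "b \<noteq> 0" "m \<noteq> 0" using ab h1 rn by auto
    have "m ^ 3 * (inverse m / (G1 n * G2 n * (a * b))) = 1 / ((a / m) * (b / m)) / (G1 n * G2 n)"
      using nz g1 g2 by (simp add: field_simps power3_eq_cube)
    then show ?case unfolding c k1 k2 using ab by simp
  qed
  have lim: "(\<lambda>n. 1 / ((1 - 3/2 * inverse (real n)) * (1 + 1/2 * inverse (real n))) / (G1 n * G2 n))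
     \<longlonglongrightarrow> 1 / ((1 - 3/2 * 0) * (1 + 1/2 * 0)) / (Gamma (-3/2) * Gamma (1/2))"
    unfolding G1_def G2_def
    by (intro tendsto_intros Gamma_series_LIMSEQ lim_inverse_n)
       (auto simp: Gamma_m32' Gamma_one_half_real)
  have "1 / ((1 - 3/2 * 0) * (1 + 1/2 * 0)) / (Gamma (-3/2) * Gamma (1/2::real)) = 3 / (4 * pi)"
  proof -
    have "sqrt pi * sqrt pi = pi" by simp
    then show ?thesis by (simp add: Gamma_m32' Gamma_one_half_real field_simps)
  qed
  with lim have "(\<lambda>n. 1 / ((1 - 3/2 * inverse (real n)) * (1 + 1/2 * inverse (real n))) / (G1 n * G2 n))
     \<longlonglongrightarrow> 3 / (4 * pi)" by simp
  then show ?thesis using tendsto_cong[OF ev] by simp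
qed

lemma cc_sums: "cc sums (4 / (3 * pi))"
proof -
  have ev: "eventually (\<lambda>N. (\<Sum>k<N. cc k) = 4/9 * (4 - 7 * inverse (real N)) * (real N ^ 3 * cc N)) sequentially"
    using eventually_ge_at_top[of "1::nat"]
  proof eventually_elim
    case (elim N)
    then have rn: "real N > 0" by simp
    show ?case unfolding cc_partial using rn by (simp add: field_simps power2_eq_square power3_eq_cube)
  qed
  have "(\<lambda>N. 4/9 * (4 - 7 * inverse (real N)) * (real N ^ 3 * cc N)) \<longlonglongrightarrow> 4/9 * (4 - 7 * 0) * (3 / (4 * pi))"
    by (intro tendsto_intros lim_inverse_n cc_lim)
  moreover have "4/9 * (4 - 7 * 0) * (3 / (4 * pi)) = 4 / (3 * pi)" by simp
  ultimately have "(\<lambda>N. 4/9 * (4 - 7 * inverse (real N)) * (real N ^ 3 * cc N)) \<longlonglongrightarrow> 4 / (3 * pi)" by simp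
  then show ?thesis unfolding sums_def using tendsto_cong[OF ev] by simp
qed

lemma cc_suminf: "suminf cc = 4 / (3 * pi)"
  using cc_sums by (rule sums_unique[symmetric])

lemma cc_bdd: "\<exists>B>0. \<forall>k. \<bar>real k ^ 3 * cc k\<bar> \<le> B"
proof -
  have "Bseq (\<lambda>k. real k ^ 3 * cc k)" using cc_lim by (intro convergent_imp_Bseq convergentI)
  then show ?thesis unfolding Bseq_def by auto
qed

lemma cc_k1_summable: "summable (\<lambda>k. \<bar>cc k\<bar> * (real k + 1))"
proof -
  obtain B where B: "B > 0" "\<And>k. \<bar>real k ^ 3 * cc k\<bar> \<le> B" using cc_bdd by blast
  have s: "summable (\<lambda>n. 2 / real n ^ 2)" by (rule summable_inv_sq)
  have "summable (\<lambda>n. B * (2 / real n ^ 2))" by (rule summable_mult[OF s])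
  then show ?thesis
  proof (rule summable_comparison_test'[where N=1])
    fix k :: nat assume k: "k \<ge> 1"
    then have rk: "real k \<ge> 1" by simp
    have "\<bar>cc k\<bar> * (real k + 1) \<le> \<bar>cc k\<bar> * (2 * real k)"
      using rk by (intro mult_left_mono) auto
    also have "\<dots> = 2 * \<bar>real k ^ 3 * cc k\<bar> / real k ^ 2"
      using rk by (simp add: abs_mult power2_eq_square power3_eq_cube field_simps)
    also have "\<dots> \<le> 2 * B / real k ^ 2"
      using B(2)[of k] rk by (intro divide_right_mono) auto
    also have "\<dots> = B * (2 / real k ^ 2)" by simp
    finally show "norm (\<bar>cc k\<bar> * (real k + 1)) \<le> B * (2 / real k ^ 2)" by simp
  qed
qed

lemma cc_abs_summable: "summable (\<lambda>k. \<bar>cc k\<bar>)"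
  by (rule summable_comparison_test'[OF cc_k1_summable, where N=0]) (simp add: mult_le_cancel_left1)

lemma cc_k_tendsto0: "(\<lambda>k. cc k * real k) \<longlonglongrightarrow> 0"
proof -
  have "(\<lambda>k. \<bar>cc k\<bar> * (real k + 1)) \<longlonglongrightarrow> 0" by (rule summable_LIMSEQ_zero[OF cc_k1_summable])
  then show ?thesis
    by (rule Lim_null_comparison[rotated]) (auto simp: abs_mult intro!: always_eventually mult_left_mono)
qed

definition Dser :: "real \<Rightarrow> real" where
  "Dser u = (\<Sum>k. cc k * (u / (u + real k)))"

lemma D_term_summable: "u \<ge> 0 \<Longrightarrow> summable (\<lambda>k. cc k * f k) " if "\<And>k. \<bar>f k\<bar> \<le> 1" for f :: "nat \<Rightarrow> real"
  by (rule summable_comparison_test'[OF cc_abs_summable, where N=0])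
     (use that in \<open>auto simp: abs_mult intro!: mult_left_le\<close>)

definition yD :: "real \<Rightarrow> nat \<Rightarrow> real" where
  "yD u k = cc k * (real k)^2 / (u + real k)"

lemma yD_step:
  assumes u: "u \<ge> 0"
  shows "yD u (Suc k) - yD u k = cc k * ((u+5/2)*(u+1/2)/(u+1+real k) - u * (u / (u + real k)) - 2)"
proof (cases "k = 0 \<and> u = 0")
  case True
  then show ?thesis by (simp add: yD_def cc_Suc cc_0)
next
  case False
  then have uk: "u + real k > 0" using u by auto
  obtain A C where AC: "A = u + real k" "C = u + 1 + real k" by blast
  have pos: "A > 0" "C > 0" using uk AC by auto
  have e1: "yD u (Suc k) = cc k * ((real k - 3/2) * (real k + 1/2)) / C"
  proof -
    have r: "(real k + 1)^2 \<noteq> 0" by simp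
    have "cc (Suc k) * (real (Suc k))^2 = cc k * ((real k - 3/2) * (real k + 1/2))"
      unfolding cc_Suc of_nat_Suc using r by (simp add: add.commute)
    then show ?thesis unfolding yD_def using AC by (simp add: add_ac)
  qed
  have e2: "yD u k = cc k * (real k)^2 / A" unfolding yD_def using AC by simp
  have "cc k * ((real k - 3/2) * (real k + 1/2)) / C - cc k * (real k)^2 / A
      = cc k * ((u+5/2)*(u+1/2)/C - u * (u / A) - 2)"
  proof -
    have "((real k - 3/2) * (real k + 1/2)) * A - (real k)^2 * C = ((u+5/2)*(u+1/2) * A - u * u * C - 2 * A * C)"
      unfolding AC power2_eq_square by algebra
    note poly = this
    have l: "((real k - 3/2) * (real k + 1/2)) / C - (real k)^2 / A
        = (((real k - 3/2) * (real k + 1/2)) * A - (real k)^2 * C) / (A * C)"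
      using pos by (simp add: diff_frac_eq)
    have r: "(u+5/2)*(u+1/2)/C - u * (u / A) - 2 = ((u+5/2)*(u+1/2) * A - u * u * C - 2 * A * C) / (A * C)"
      using pos by (simp add: field_simps)
    have "cc k * ((real k - 3/2) * (real k + 1/2)) / C - cc k * (real k)^2 / A
        = cc k * (((real k - 3/2) * (real k + 1/2)) / C - (real k)^2 / A)"
      by (simp add: right_diff_distrib)
    also have "\<dots> = cc k * ((u+5/2)*(u+1/2)/C - u * (u / A) - 2)"
      unfolding l r poly ..
    finally show ?thesis .
  qed
  then show ?thesis unfolding e1 e2 using AC by simp
qed

lemma cc_f_summable: "(\<And>k. \<bar>f k\<bar> \<le> 1) \<Longrightarrow> summable (\<lambda>k. cc k * f k)"
  by (rule summable_comparison_test'[OF cc_abs_summable, where N=0])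
     (auto simp: abs_mult intro!: mult_left_le)

lemma yD_tendsto0: "u \<ge> 0 \<Longrightarrow> yD u \<longlonglongrightarrow> 0"
proof (rule Lim_null_comparison[OF _ iffD2[OF tendsto_rabs_zero_iff cc_k_tendsto0]])
  assume u: "u \<ge> 0"
  show "eventually (\<lambda>M. norm (yD u M) \<le> \<bar>cc M * real M\<bar>) sequentially"
    using eventually_ge_at_top[of "1::nat"]
  proof eventually_elim
    case (elim M)
    then have rM: "real M \<ge> 1" by simp
    have d: "u + real M > 0" using u rM by simp
    have "norm (yD u M) = \<bar>cc M\<bar> * (real M * (real M / (u + real M)))"
      unfolding yD_def using d by (simp add: abs_mult abs_divide power2_eq_square)
    also have "\<dots> \<le> \<bar>cc M\<bar> * (real M * 1)"
      using d u rM by (intro mult_left_mono) (auto simp: divide_le_eq)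
    finally show ?case by (simp add: abs_mult)
  qed
qed

lemma D_rec:
  assumes u: "u \<ge> 0"
  shows "(u+5/2)*(u+1/2)*(\<Sum>k. cc k / (u + 1 + real k)) - u * Dser u - 2 * (4 / (3*pi)) = 0"
proof -
  define s where "s k = cc k * ((u+5/2)*(u+1/2)/(u+1+real k) - u * (u / (u + real k)) - 2)" for k
  have b1: "\<bar>1 / (u + 1 + real k)\<bar> \<le> 1" for k using u by (simp add: divide_le_eq)
  have b2: "\<bar>u / (u + real k)\<bar> \<le> 1" for k
  proof (cases "u + real k = 0")
    case True then show ?thesis by simp
  next
    case False then have "u + real k > 0" using u by simp
    then show ?thesis using u by (simp add: divide_le_eq)
  qed
  have S1: "summable (\<lambda>k. cc k * (1 / (u + 1 + real k)))" by (rule cc_f_summable[OF b1])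
  have S2: "summable (\<lambda>k. cc k * (u / (u + real k)))" by (rule cc_f_summable[OF b2])
  have h1: "(\<lambda>k. (u+5/2)*(u+1/2) * (cc k * (1 / (u + 1 + real k))) - u * (cc k * (u / (u + real k))) - 2 * cc k)
     sums ((u+5/2)*(u+1/2) * (\<Sum>k. cc k * (1 / (u + 1 + real k))) - u * Dser u - 2 * (4 / (3*pi)))"
    unfolding Dser_def
    by (rule sums_diff, rule sums_diff, rule sums_mult, rule summable_sums, rule S1,
        rule sums_mult, rule summable_sums, rule S2, rule sums_mult, rule cc_sums)
  have h2: "(\<lambda>k. (u+5/2)*(u+1/2) * (cc k * (1 / (u + 1 + real k))) - u * (cc k * (u / (u + real k))) - 2 * cc k) = s"
  proof (rule ext)
    fix k
    obtain P D Q where PD: "P = (u+5/2)*(u+1/2)" "D = u + 1 + real k" "Q = u / (u + real k)" by blast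
    have "P * (cc k * (1 / D)) - u * (cc k * Q) - 2 * cc k = cc k * (P / D - u * Q - 2)"
      by (simp only: right_diff_distrib) (simp add: field_simps)
    then show "(u+5/2)*(u+1/2) * (cc k * (1 / (u + 1 + real k))) - u * (cc k * (u / (u + real k))) - 2 * cc k = s k"
      unfolding s_def PD by simp
  qed
  have h3: "s sums 0"
  proof -
    have "(\<Sum>k<M. s k) = yD u M - yD u 0" for M
    proof -
      have "(\<Sum>k<M. s k) = (\<Sum>k<M. yD u (Suc k) - yD u k)"
        using yD_step[OF u] by (simp add: s_def)
      also have "\<dots> = yD u M - yD u 0" by (rule sum_lessThan_telescope)
      finally show ?thesis .
    qed
    moreover have "yD u 0 = 0" by (simp add: yD_def)
    ultimately have "(\<lambda>M. \<Sum>k<M. s k) = yD u" by simp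
    then show ?thesis unfolding sums_def using yD_tendsto0[OF u] by simp
  qed
  from h1 have "s sums ((u+5/2)*(u+1/2) * (\<Sum>k. cc k * (1 / (u + 1 + real k))) - u * Dser u - 2 * (4 / (3*pi)))"
    unfolding h2 .
  then have "(u+5/2)*(u+1/2) * (\<Sum>k. cc k * (1 / (u + 1 + real k))) - u * Dser u - 2 * (4 / (3*pi)) = 0"
    using h3 by (rule sums_unique2)
  then show ?thesis by simp
qed

definition WB :: "nat \<Rightarrow> real \<Rightarrow> nat \<Rightarrow> real" where
  "WB k x n = (real n + 1 + real k) * (real n + 1 + x) * Bf n (real k) * Bf n x / (real k + x + 1)"

lemma WB_step:
  assumes x: "x > -1"
  shows "WB k x n - WB k x (Suc n) = (2 * real n + 1) * Bf n (real k) * Bf n x"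
proof -
  have k: "real k > -1" by simp
  obtain a b where ab: "a = Bf n (real k)" "b = Bf n x" by blast
  obtain P Q R where PQ: "P = real n + 2 + real k" "Q = real n + 2 + x" "R = real k + x + 1" by blast
  have pos: "P > 0" "Q > 0" "R > 0" using PQ x by auto
  have e1: "WB k x (Suc n) = P * Q * (a * (real n - real k) / P) * (b * (real n - x) / Q) / R"
    unfolding WB_def using Bf_Suc[OF k, of n] Bf_Suc[OF x, of n] ab PQ by (simp add: add_ac)
  have e2: "WB k x n = (real n + 1 + real k) * (real n + 1 + x) * a * b / R"
    unfolding WB_def using ab PQ by (simp add: add_ac)
  have "(real n + 1 + real k) * (real n + 1 + x) * a * b / R - P * Q * (a * (real n - real k) / P) * (b * (real n - x) / Q) / R
      = a * b * ((real n + 1 + real k) * (real n + 1 + x) - (real n - real k) * (real n - x)) / R"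
    using pos by (simp add: field_simps)
  also have "(real n + 1 + real k) * (real n + 1 + x) - (real n - real k) * (real n - x) = (2 * real n + 1) * R"
    unfolding PQ by algebra
  also have "a * b * ((2 * real n + 1) * R) / R = (2 * real n + 1) * a * b" using pos by simp
  finally show ?thesis unfolding e1 e2 ab .
qed

lemma BI:
  assumes x: "x > -1"
  shows "(\<Sum>n<Suc k. (2 * real n + 1) * Bf n (real k) * Bf n x) = (real k + 1) * (x + 1) / (real k + x + 1)"
proof -
  have "(\<Sum>n<Suc k. (2 * real n + 1) * Bf n (real k) * Bf n x) = (\<Sum>n<Suc k. WB k x n - WB k x (Suc n))"
    using WB_step[OF x] by simp
  also have "\<dots> = WB k x 0 - WB k x (Suc k)" by (rule sum_lessThan_telescope')
  also have "WB k x (Suc k) = 0" unfolding WB_def using Bf_zero[of k "Suc k"] by simp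
  also have "WB k x 0 = (real k + 1) * (x + 1) / (real k + x + 1)" unfolding WB_def by (simp add: add_ac)
  finally show ?thesis by simp
qed

lemma sum_odd: "(\<Sum>n<Suc k. (2 * real n + 1)) = (real k + 1)^2"
  by (induction k) (simp_all add: power2_eq_square algebra_simps)

lemma finsupp_summable:
  fixes f :: "nat \<Rightarrow> real"
  assumes "\<And>n. n \<ge> N \<Longrightarrow> f n = 0"
  shows "f summable_on UNIV" and "infsum f UNIV = (\<Sum>n<N. f n)"
proof -
  have "f summable_on UNIV \<longleftrightarrow> f summable_on {..<N}"
    by (rule summable_on_cong_neutral) (use assms in auto)
  then show "f summable_on UNIV" by simp
  have "infsum f UNIV = infsum f {..<N}"
    by (rule infsum_cong_neutral) (use assms in auto)
  then show "infsum f UNIV = (\<Sum>n<N. f n)" by simp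
qed

lemma infsum_suminf:
  fixes f :: "nat \<Rightarrow> real"
  assumes "summable (\<lambda>n. \<bar>f n\<bar>)"
  shows "infsum f UNIV = suminf f"
proof -
  have "summable f" using assms by (rule summable_rabs_cancel)
  then have "f sums suminf f" by (rule summable_sums)
  then have "(f has_sum suminf f) UNIV" using assms by (intro norm_summable_imp_has_sum) auto
  then show ?thesis by (rule infsumI)
qed

definition gG :: "real \<Rightarrow> nat \<Rightarrow> nat \<Rightarrow> real" where
  "gG x k n = cc k * (2 * real n + 1) * Bf n (real k) * Bf n x / (real k + 1)"

definition phi :: "nat \<Rightarrow> real" where
  "phi n = infsum (\<lambda>k. cc k * (2 * real n + 1) * Bf n (real k) / (real k + 1)) UNIV"

lemma gG_zero: "n \<ge> Suc k \<Longrightarrow> gG x k n = 0"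
  unfolding gG_def using Bf_zero[of k n] by simp

lemma gG_inner:
  assumes x: "x > -1"
  shows "infsum (\<lambda>n. gG x k n) UNIV = cc k * ((x + 1) / (x + 1 + real k))"
proof -
  have "infsum (\<lambda>n. gG x k n) UNIV = (\<Sum>n<Suc k. gG x k n)"
    by (rule finsupp_summable(2)) (rule gG_zero)
  also have "\<dots> = cc k / (real k + 1) * (\<Sum>n<Suc k. (2 * real n + 1) * Bf n (real k) * Bf n x)"
    unfolding gG_def sum_distrib_left by (rule sum.cong) (simp_all add: field_simps)
  also have "\<dots> = cc k / (real k + 1) * ((real k + 1) * (x + 1) / (real k + x + 1))"
    unfolding BI[OF x] ..
  also have "\<dots> = cc k * ((x + 1) / (x + 1 + real k))"
  proof -
    have nz: "real k + 1 \<noteq> 0" by simp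
    have "(real k + 1) * (x + 1) / (real k + x + 1) = (real k + 1) * ((x + 1) / (real k + x + 1))" by simp
    moreover have "cc k / (real k + 1) * ((real k + 1) * ((x + 1) / (real k + x + 1))) = cc k * ((x + 1) / (real k + x + 1))"
      using nz by simp
    moreover have "real k + x + 1 = x + 1 + real k" by simp
    ultimately show ?thesis by simp
  qed
  finally show ?thesis .
qed

lemma gG_inner_abs:
  assumes x: "x > -1"
  shows "infsum (\<lambda>n. norm (gG x k n)) UNIV \<le> \<bar>cc k\<bar> * (real k + 1)"
proof -
  have "infsum (\<lambda>n. norm (gG x k n)) UNIV = (\<Sum>n<Suc k. norm (gG x k n))"
    by (rule finsupp_summable(2)) (simp add: gG_zero)
  also have "\<dots> \<le> (\<Sum>n<Suc k. \<bar>cc k\<bar> / (real k + 1) * (2 * real n + 1))"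
  proof (rule sum_mono)
    fix n
    have b1: "\<bar>Bf n (real k)\<bar> \<le> 1" by (rule Bf_bound) simp
    have b2: "\<bar>Bf n x\<bar> \<le> 1" by (rule Bf_bound[OF x])
    have "\<bar>Bf n (real k)\<bar> * \<bar>Bf n x\<bar> \<le> 1 * 1" using b1 b2 by (intro mult_mono) auto
    then have "norm (gG x k n) = \<bar>cc k\<bar> / (real k + 1) * (2 * real n + 1) * (\<bar>Bf n (real k)\<bar> * \<bar>Bf n x\<bar>)"
      unfolding gG_def by (simp add: abs_mult abs_divide)
    also have "\<dots> \<le> \<bar>cc k\<bar> / (real k + 1) * (2 * real n + 1) * 1"
      using b1 b2 \<open>\<bar>Bf n (real k)\<bar> * \<bar>Bf n x\<bar> \<le> 1 * 1\<close> by (intro mult_left_mono) auto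
    finally show "norm (gG x k n) \<le> \<bar>cc k\<bar> / (real k + 1) * (2 * real n + 1)" by simp
  qed
  also have "\<dots> = \<bar>cc k\<bar> / (real k + 1) * (real k + 1)^2"
    unfolding sum_distrib_left[symmetric] sum_odd ..
  also have "\<dots> = \<bar>cc k\<bar> * (real k + 1)" by (simp add: power2_eq_square)
  finally show ?thesis .
qed

lemma G_abs:
  assumes x: "x > -1"
  shows "(\<lambda>(k,n). gG x k n) abs_summable_on (UNIV \<times> UNIV)"
proof -
  have i: "(\<lambda>n. gG x k n) abs_summable_on UNIV" for k
    by (rule finsupp_summable(1)[where N="Suc k"]) (simp add: gG_zero)
  have g: "(\<lambda>k. \<bar>cc k\<bar> * (real k + 1)) abs_summable_on UNIV"
    by (rule norm_summable_imp_summable_on) (use cc_k1_summable in \<open>simp add: abs_mult\<close>)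
  have ii: "(\<lambda>k. infsum (\<lambda>n. norm (gG x k n)) UNIV) abs_summable_on UNIV"
  proof (rule Infinite_Sum.abs_summable_on_comparison_test[OF g])
    fix k :: nat
    have "infsum (\<lambda>n. norm (gG x k n)) UNIV \<ge> 0" by (rule infsum_nonneg) simp
    then show "norm (infsum (\<lambda>n. norm (gG x k n)) UNIV) \<le> norm (\<bar>cc k\<bar> * (real k + 1))"
      using gG_inner_abs[OF x, of k] by simp
  qed
  have "(\<lambda>(k,n). gG x k n) abs_summable_on Sigma UNIV (\<lambda>_. UNIV)"
    using Infinite_Sum.abs_summable_on_Sigma_iff[where f="\<lambda>(k,n). gG x k n" and A=UNIV and B="\<lambda>_. UNIV"] i ii by simp
  then show ?thesis by simp
qed

lemma D_phi:
  assumes x: "x > -1"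
  shows "Dser (x + 1) = infsum (\<lambda>n. phi n * Bf n x) UNIV"
proof -
  have sw: "infsum (\<lambda>k. infsum (\<lambda>n. gG x k n) UNIV) UNIV = infsum (\<lambda>n. infsum (\<lambda>k. gG x k n) UNIV) UNIV"
    by (rule infsum_swap_banach) (rule abs_summable_summable[OF G_abs[OF x]])
  have l: "infsum (\<lambda>k. infsum (\<lambda>n. gG x k n) UNIV) UNIV = Dser (x + 1)"
  proof -
    have "infsum (\<lambda>k. infsum (\<lambda>n. gG x k n) UNIV) UNIV = infsum (\<lambda>k. cc k * ((x + 1) / (x + 1 + real k))) UNIV"
      using gG_inner[OF x] by simp
    also have "\<dots> = (\<Sum>k. cc k * ((x + 1) / (x + 1 + real k)))"
    proof (rule infsum_suminf)
      show "summable (\<lambda>k. \<bar>cc k * ((x + 1) / (x + 1 + real k))\<bar>)"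
      proof (rule summable_comparison_test'[OF cc_abs_summable, where N=0])
        fix k :: nat
        have q: "\<bar>(x + 1) / (x + 1 + real k)\<bar> \<le> 1" using x by (simp add: divide_le_eq)
        show "norm \<bar>cc k * ((x + 1) / (x + 1 + real k))\<bar> \<le> \<bar>cc k\<bar>"
          unfolding real_norm_def abs_abs abs_mult by (rule mult_left_le[OF q]) simp
      qed
    qed
    finally show ?thesis unfolding Dser_def .
  qed
  have r: "infsum (\<lambda>k. gG x k n) UNIV = phi n * Bf n x" for n
  proof -
    have "infsum (\<lambda>k. gG x k n) UNIV = infsum (\<lambda>k. (cc k * (2 * real n + 1) * Bf n (real k) / (real k + 1)) * Bf n x) UNIV"
      unfolding gG_def by simp
    also have "\<dots> = phi n * Bf n x" unfolding phi_def by (rule infsum_cmult_left')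
    finally show ?thesis .
  qed
  show ?thesis using sw l r by simp
qed

lemma N_int: "Nser (real m) = (\<Sum>n<Suc m. nu n * Bf n (real m))"
  unfolding Nser_def by (rule suminf_finite) (auto simp: Bf_zero)

lemma D_int: "Dser (real m + 1) = (\<Sum>n<Suc m. phi n * Bf n (real m))"
proof -
  have "Dser (real m + 1) = infsum (\<lambda>n. phi n * Bf n (real m)) UNIV"
    by (rule D_phi) simp
  also have "\<dots> = (\<Sum>n<Suc m. phi n * Bf n (real m))"
    by (rule finsupp_summable(2)) (simp add: Bf_zero)
  finally show ?thesis .
qed

lemma Dser_shift:
  assumes u: "u \<ge> 0"
  shows "Dser (u + 1) = (u + 1) * (\<Sum>k. cc k / (u + 1 + real k))"
proof -
  have b: "\<bar>1 / (u + 1 + real k)\<bar> \<le> 1" for k using u by (simp add: divide_le_eq)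
  have S: "summable (\<lambda>k. cc k * (1 / (u + 1 + real k)))" by (rule cc_f_summable[OF b])
  have "Dser (u + 1) = (\<Sum>k. (u + 1) * (cc k * (1 / (u + 1 + real k))))"
    unfolding Dser_def by (rule suminf_cong) (simp add: add_ac mult.commute mult.left_commute)
  also have "\<dots> = (u + 1) * (\<Sum>k. cc k * (1 / (u + 1 + real k)))"
    by (rule suminf_mult[OF S])
  finally show ?thesis by simp
qed

lemma D_rec':
  assumes u: "u \<ge> 0"
  shows "(u+5/2)*(u+1/2) / (u+1) * Dser (u + 1) - u * Dser u = 8 / (3*pi)"
proof -
  have "(u+5/2)*(u+1/2) / (u+1) * Dser (u + 1) = (u+5/2)*(u+1/2) * (\<Sum>k. cc k / (u + 1 + real k))"
    unfolding Dser_shift[OF u] using u by simp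
  then show ?thesis using D_rec[OF u] by simp
qed

lemma int_values: "Nser (real m) = 15 * pi / 32 * Dser (real m + 1)"
proof (induction m)
  case 0
  have n0: "Nser 0 = 1" using N_int[of 0] by (simp add: nu_0)
  have "(0+5/2)*(0+1/2) / (0+1) * Dser (0 + 1) - 0 * Dser 0 = 8 / (3*pi)"
    by (rule D_rec') simp
  then have "Dser 1 = 32 / (15 * pi)" by simp
  then show ?case using n0 by simp
next
  case (Suc m)
  define c where "c = (real m + 7/2) * (real m + 3/2) / (real m + 2)"
  have cpos: "c > 0" unfolding c_def by simp
  have nr: "c * Nser (real m + 1) - (real m + 1) * Nser (real m) = 5/4"
    using N_rec[of "real m"] unfolding c_def by simp
  have dr: "c * Dser (real m + 1 + 1) - (real m + 1) * Dser (real m + 1) = 8 / (3*pi)"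
    using D_rec'[of "real m + 1"] unfolding c_def by (simp add: add_ac)
  have "c * Nser (real m + 1) = 5/4 + (real m + 1) * Nser (real m)"
    using nr by linarith
  also have "\<dots> = 5/4 + (real m + 1) * (15 * pi / 32 * Dser (real m + 1))"
    unfolding Suc.IH ..
  also have "\<dots> = 15 * pi / 32 * (8 / (3*pi) + (real m + 1) * Dser (real m + 1))"
    by (simp add: field_simps)
  also have "\<dots> = 15 * pi / 32 * (c * Dser (real m + 1 + 1))" using dr by simp
  finally have "c * Nser (real m + 1) = c * (15 * pi / 32 * Dser (real m + 1 + 1))" by simp
  then have "Nser (real m + 1) = 15 * pi / 32 * Dser (real m + 1 + 1)" using cpos by simp
  moreover have "real (Suc m) = real m + 1" by simp
  ultimately show ?case by (simp only:)
qed

lemma nu_phi: "nu n = 15 * pi / 32 * phi n"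
proof (induction n rule: less_induct)
  case (less n)
  have "Nser (real n) = 15 * pi / 32 * Dser (real n + 1)" by (rule int_values)
  then have "(\<Sum>j<Suc n. nu j * Bf j (real n)) = 15 * pi / 32 * (\<Sum>j<Suc n. phi j * Bf j (real n))"
    unfolding N_int D_int .
  then have "(\<Sum>j<n. nu j * Bf j (real n)) + nu n * Bf n (real n)
      = (\<Sum>j<n. 15 * pi / 32 * phi j * Bf j (real n)) + 15 * pi / 32 * phi n * Bf n (real n)"
    by (simp add: sum_distrib_left algebra_simps)
  moreover have "(\<Sum>j<n. nu j * Bf j (real n)) = (\<Sum>j<n. 15 * pi / 32 * phi j * Bf j (real n))"
    by (rule sum.cong) (simp_all add: less.IH)
  ultimately have "nu n * Bf n (real n) = 15 * pi / 32 * phi n * Bf n (real n)" by simp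
  then show ?case using Bf_nz[of n] by simp
qed

lemma main_eq:
  assumes x: "x > -1"
  shows "Nser x = 15 * pi / 32 * Dser (x + 1)"
proof -
  have K: "15 * pi / 32 \<noteq> (0::real)" by simp
  have "Dser (x + 1) = infsum (\<lambda>n. phi n * Bf n x) UNIV" by (rule D_phi[OF x])
  also have "\<dots> = infsum (\<lambda>n. (nu n * Bf n x) * inverse (15 * pi / 32)) UNIV"
    using K by (simp add: nu_phi field_simps)
  also have "\<dots> = infsum (\<lambda>n. nu n * Bf n x) UNIV * inverse (15 * pi / 32)"
    by (rule infsum_cmult_left')
  also have "infsum (\<lambda>n. nu n * Bf n x) UNIV = Nser x"
    unfolding Nser_def by (rule infsum_suminf[OF N_abs_summable[OF x]])
  finally show ?thesis using K by (simp add: field_simps)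
qed

lemma hyp_N:
  assumes x: "x > -1"
  shows "hypergeom [-3/2, 1, -x] [7/2, 2 + x] (-1) = Nser x"
  unfolding hypergeom_def Nser_def
proof (rule suminf_cong)
  fix n
  have q1: "pochhammer (7/2) n > (0::real)" by (rule pochhammer_pos) simp
  have q2: "pochhammer (2 + x) n > 0" by (rule poch_pos2[OF x])
  have f: "fact n > (0::real)" by simp
  show "prod_list (map (\<lambda>a. pochhammer a n) [-3/2, 1, -x]) / prod_list (map (\<lambda>b. pochhammer b n) [7/2, 2 + x]) * (-1) ^ n / fact n
      = nu n * Bf n x"
    unfolding nu_def Bf_def using q1 q2 f by (simp add: pochhammer_fact[symmetric] field_simps)
qed

lemma poch_ratio:
  assumes x: "x > -1"
  shows "pochhammer (1 + x) n / pochhammer (2 + x) n = (x + 1) / (x + 1 + real n)"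
proof -
  have a: "pochhammer (1 + x) (Suc n) = (1 + x) * pochhammer (2 + x) n"
    by (simp add: pochhammer_rec add_ac)
  have b: "pochhammer (1 + x) (Suc n) = pochhammer (1 + x) n * (1 + x + real n)"
    by (simp add: pochhammer_Suc)
  have q: "pochhammer (2 + x) n > 0" by (rule poch_pos2[OF x])
  have d: "x + 1 + real n > 0" using x by simp
  from a b have "pochhammer (1 + x) n * (x + 1 + real n) = (x + 1) * pochhammer (2 + x) n"
    by (simp add: add_ac)
  then show ?thesis using q d by (simp add: field_simps)
qed

lemma hyp_D:
  assumes x: "x > -1"
  shows "hypergeom [-3/2, 1/2, 1 + x] [1, 2 + x] 1 = Dser (x + 1)"
  unfolding hypergeom_def Dser_def
proof (rule suminf_cong)
  fix n
  have f: "fact n > (0::real)" by simp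
  have "prod_list (map (\<lambda>a. pochhammer a n) [-3/2, 1/2, 1 + x]) / prod_list (map (\<lambda>b. pochhammer b n) [1, 2 + x]) * 1 ^ n / fact n
      = (pochhammer (-3/2) n * pochhammer (1/2) n / (fact n)^2) * (pochhammer (1 + x) n / pochhammer (2 + x) n)"
    using f by (simp add: pochhammer_fact[symmetric] power2_eq_square mult_ac)
  also have "\<dots> = cc n * ((x + 1) / (x + 1 + real n))"
    unfolding poch_ratio[OF x] cc_def ..
  finally show "prod_list (map (\<lambda>a. pochhammer a n) [-3/2, 1/2, 1 + x]) / prod_list (map (\<lambda>b. pochhammer b n) [1, 2 + x]) * 1 ^ n / fact n
      = cc n * ((x + 1) / (x + 1 + real n))" .
qed

lemma cc_nonneg: "cc (k + 2) \<ge> 0"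
proof (induction k)
  case 0
  have "cc (0 + 2) = 9/64" by (simp add: numeral_2_eq_2 cc_Suc cc_0)
  then show ?case by simp
next
  case (Suc k)
  have "cc (Suc k + 2) = cc (k + 2) * ((real (k+2) - 3/2) * (real (k+2) + 1/2) / (real (k+2) + 1)^2)"
    using cc_Suc[of "k+2"] by simp
  moreover have "(real (k+2) - 3/2) * (real (k+2) + 1/2) / (real (k+2) + 1)^2 \<ge> 0" by simp
  ultimately show ?case using Suc.IH by simp
qed

lemma Dser_pos:
  assumes u: "u > 0"
  shows "Dser u > 0"
proof -
  have b: "\<bar>u / (u + real k)\<bar> \<le> 1" for k using u by (simp add: divide_le_eq)
  have S: "summable (\<lambda>k. cc k * (u / (u + real k)))" by (rule cc_f_summable[OF b])
  have "Dser u = (\<Sum>k. cc (k + 2) * (u / (u + real (k + 2)))) + (\<Sum>i<2. cc i * (u / (u + real i)))"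
    unfolding Dser_def by (rule suminf_split_initial_segment[OF S])
  moreover have "(\<Sum>k. cc (k + 2) * (u / (u + real (k + 2)))) \<ge> 0"
    by (rule suminf_nonneg) (use summable_ignore_initial_segment[OF S, of 2] u cc_nonneg in auto)
  moreover have "(\<Sum>i<2. cc i * (u / (u + real i))) = 1 - 3/4 * (u / (u + 1))"
    using u by (simp add: numeral_2_eq_2 cc_0 cc_Suc)
  moreover have "u / (u + 1) < 1" using u by simp
  ultimately show ?thesis by linarith
qed

theorem mainTheorem15:
  fixes \<eta> :: real
  assumes "\<eta> > -1"
  shows "15 * pi / 32 =
    hypergeom [-3/2, 1, -\<eta>] [7/2, 2 + \<eta>] (-1) /
    hypergeom [-3/2, 1/2, 1 + \<eta>] [1, 2 + \<eta>] 1"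
proof -
  have d: "Dser (\<eta> + 1) > 0" by (rule Dser_pos) (use assms in simp)
  show ?thesis unfolding hyp_N[OF assms] hyp_D[OF assms] main_eq[OF assms] using d by simp
qed

end
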